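(* Let $f\in\mathcal{A}_c(\mathbb{R})$. Let $g_1,g_2\in C^2(\mathbb{R})$ be such that $\int_{|t|>1}|t^2g_k^{(n)}(t)|\,dt<\infty$ for $n=0,1,2$ and $k=1,2$. Then $\int_{-\infty}^\infty\widehat{f\ast g_1}\,g_2=\int_{-\infty}^\infty\hat f\,\widehat{g_1}\,g_2$.
   Context: $\mathcal{B}_c(\mathbb{R})$ is the set of $F:[-\infty,\infty]\to\mathbb{C}$ continuous on $\mathbb{R}$ with limits $F(\pm\infty)$ existing and $F(-\infty)=0$. $\mathcal{A}_c(\mathbb{R})$ is the set of tempered distributions $f=F'$ (distributional derivative) with $F\in\mathcal{B}_c(\mathbb{R})$; for $g$ of bounded variation, $\int fg=F(\infty)g(\infty)-\int F\,dg$. For $f\in\mathcal{A}_c(\mathbb{R})$ and $g\in L^1(\mathbb{R})$, $f\ast g\in\mathcal{A}_c(\mathbb{R})$ is the distribution whose primitive is $F\ast g(x)=\int F(x-y)g(y)\,dy$. $v_s(t)=(1-ist-e^{-ist})/t^2$ ($t\neq0$), $v_s(0)=s^2/2$; $\Omega_f(s)=\int v_sf$; the Fourier transform of $f\in\mathcal{A}_c(\mathbb{R})$ is $\hat f=\Omega_f''$ (second distributional derivative), with integrals of $\hat f$ against functions understood as distributional integrals; for $g\in L^1$, $\hat g(s)=\int e^{-ist}g(t)dt$. *)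

theory Defs
  imports "HOL-Analysis.Analysis"
begin

text \<open>Elements f of A_c are represented by their (unique) primitive F in B_c.\<close>

definition Bc :: "(real \<Rightarrow> complex) set" where
  "Bc = {F. continuous_on UNIV F \<and> (\<exists>L. (F \<longlongrightarrow> L) at_top) \<and> (F \<longlongrightarrow> 0) at_bot}"

definition at_pinf :: "(real \<Rightarrow> complex) \<Rightarrow> complex" where
  "at_pinf F = Lim at_top F"

definition vs :: "real \<Rightarrow> real \<Rightarrow> complex" where
  "vs s t = (if t = 0 then complex_of_real (s^2 / 2)
             else (1 - \<i> * complex_of_real (s * t) - exp (- \<i> * complex_of_real (s * t)))
                  / complex_of_real (t^2))"

text \<open>Integral of f = F' against a (BV, here C^1) function g:
  F(inf) g(inf) - int F dg, with dg = g'(t) dt.\<close>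
definition Ac_int :: "(real \<Rightarrow> complex) \<Rightarrow> (real \<Rightarrow> complex) \<Rightarrow> complex" where
  "Ac_int F g = at_pinf F * Lim at_top g
     - (\<integral>t. F t * vector_derivative g (at t) \<partial>lborel)"

definition Omega :: "(real \<Rightarrow> complex) \<Rightarrow> real \<Rightarrow> complex" where
  "Omega F s = Ac_int F (vs s)"

text \<open>Primitive of f * g.\<close>
definition conv_prim :: "(real \<Rightarrow> complex) \<Rightarrow> (real \<Rightarrow> complex) \<Rightarrow> real \<Rightarrow> complex" where
  "conv_prim F g x = (\<integral>y. F (x - y) * g y \<partial>lborel)"

definition FT :: "(real \<Rightarrow> complex) \<Rightarrow> real \<Rightarrow> complex" where
  "FT g s = (\<integral>t. exp (- \<i> * complex_of_real (s * t)) * g t \<partial>lborel)"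

definition second_deriv :: "(real \<Rightarrow> complex) \<Rightarrow> real \<Rightarrow> complex" where
  "second_deriv h s = vector_derivative (\<lambda>x. vector_derivative h (at x)) (at s)"

text \<open>Distributional integral of hat f = Omega_f'' against phi: int Omega_f phi''.\<close>
definition FT_Ac_int :: "(real \<Rightarrow> complex) \<Rightarrow> (real \<Rightarrow> complex) \<Rightarrow> complex" where
  "FT_Ac_int F phi = (\<integral>s. Omega F s * second_deriv phi s \<partial>lborel)"

end

theory Submission
  imports Defs "HOL-Probability.Characteristic_Functions" "HOL-Probability.Sinc_Integral"
begin

definition Wf :: "real \<Rightarrow> real \<Rightarrow> complex" where
  "Wf s t = (\<i> * of_real s * (1 + exp (- \<i> * of_real (s*t)))
      - 2 * (1 - exp (- \<i> * of_real (s*t))) / of_real t) / of_real (t^2)"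

lemma vs_deriv:
  assumes t: "t \<noteq> 0"
  shows "(vs s has_vector_derivative Wf s t) (at t)"
proof -
  define Vc where "Vc z = (1 - \<i> * of_real s * z - exp (- \<i> * of_real s * z)) / z^2" for z :: complex
  define D where "D = ((- \<i> * of_real s + \<i> * of_real s * exp (- \<i> * of_real s * of_real t)) * (of_real t)^2
        - (1 - \<i> * of_real s * of_real t - exp (- \<i> * of_real s * of_real t)) * (2 * of_real t)) / ((of_real t)^2)^2"
  have z: "(complex_of_real t) \<noteq> 0" using t by simp
  have "(Vc has_field_derivative D) (at (of_real t))"
    unfolding Vc_def D_def
    by (rule derivative_eq_intros refl | use z in simp)+
  then have "((\<lambda>x. Vc (of_real x)) has_vector_derivative D) (at t)"
    by (rule has_vector_derivative_real_field)
  moreover have "D = Wf s t"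
    unfolding D_def Wf_def using z
    by (simp add: field_simps power2_eq_square)
  moreover have eq: "Vc (of_real y) = vs s y" if "y \<in> - {0}" for y
    using that unfolding vs_def Vc_def by (simp add: mult.assoc)
  ultimately have 1: "((\<lambda>x. Vc (of_real x)) has_vector_derivative Wf s t) (at t)" by simp
  show ?thesis
    by (rule has_vector_derivative_transform_within_open[OF 1, of "-{0}"]) (use t eq in auto)
qed

definition Nf :: "real \<Rightarrow> complex" where
  "Nf a = \<i> * of_real a * (1 + exp (- \<i> * of_real a)) - 2 * (1 - exp (- \<i> * of_real a))"

lemma Wf_Nf: "t \<noteq> 0 \<Longrightarrow> Wf s t = Nf (s*t) / of_real (t^3)"
  unfolding Wf_def Nf_def by (simp add: field_simps power2_eq_square power3_eq_cube)

lemma Nf_small: "norm (Nf a) \<le> \<bar>a\<bar>^3"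
proof -
  define e where "e = exp (- \<i> * of_real a)"
  have e: "e = iexp (-a)" unfolding e_def by simp
  have 1: "norm (e - (1 - \<i> * of_real a)) \<le> a^2 / 2"
    using iexp_approx1[of "-a" 1] unfolding e by (simp add: power2_eq_square)
  have s2: "(\<Sum>k\<le>Suc (Suc 0). (\<i> * of_real (-a))^k / fact k) = 1 - \<i> * of_real a - of_real (a^2) / 2"
    by (simp add: power2_eq_square algebra_simps)
  have 2: "norm (e - (1 - \<i> * of_real a - of_real (a^2) / 2)) \<le> \<bar>a\<bar>^3 / 6"
    using iexp_approx1[of "-a" "Suc (Suc 0)"] unfolding e s2 by (simp add: numeral_3_eq_3)
  have "Nf a = \<i> * of_real a * (e - (1 - \<i> * of_real a)) + 2 * (e - (1 - \<i> * of_real a - of_real (a^2) / 2))"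
    unfolding Nf_def e_def by (simp add: algebra_simps power2_eq_square)
  also have "norm \<dots> \<le> \<bar>a\<bar> * (a^2/2) + 2 * (\<bar>a\<bar>^3 / 6)"
  proof (rule order_trans[OF norm_triangle_ineq], rule add_mono)
    show "norm (\<i> * of_real a * (e - (1 - \<i> * of_real a))) \<le> \<bar>a\<bar> * (a^2/2)"
      unfolding norm_mult using mult_left_mono[OF 1 abs_ge_zero[of a]] by simp
    show "norm (2 * (e - (1 - \<i> * of_real a - of_real (a^2) / 2))) \<le> 2 * (\<bar>a\<bar>^3 / 6)"
      unfolding norm_mult using 2 by simp
  qed
  also have "\<dots> = 5/6 * \<bar>a\<bar>^3"
    by (subst power2_abs[symmetric]) (simp add: power2_eq_square power3_eq_cube)
  also have "\<dots> \<le> \<bar>a\<bar>^3" by simp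
  finally show ?thesis .
qed

lemma norm_exp_ii: "norm (exp (- \<i> * complex_of_real a)) = 1"
  by (metis norm_exp_i_times of_real_minus mult_minus_left mult_minus_right)

lemma Nf_large: "norm (Nf a) \<le> 2 * \<bar>a\<bar> + 4"
proof -
  have "norm (Nf a) \<le> norm (\<i> * of_real a * (1 + exp (- \<i> * of_real a))) + norm (2 * (1 - exp (- \<i> * of_real a)))"
    unfolding Nf_def by (rule norm_triangle_ineq4)
  also have "\<dots> \<le> \<bar>a\<bar> * 2 + 2 * 2"
    by (intro add_mono) (auto simp: norm_mult norm_exp_ii intro!: mult_left_mono
        order_trans[OF norm_triangle_ineq] order_trans[OF norm_triangle_ineq4])
  finally show ?thesis by simp
qed

lemma Wf_bound: "norm (Wf s t) \<le> 6 * \<bar>s\<bar>^3 / (1 + (s*t)^2)"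
proof (cases "t = 0")
  case True then show ?thesis by (simp add: Wf_def)
next
  case t: False
  define a where "a = s * t"
  have key: "norm (Nf a) * (1 + a^2) \<le> 6 * \<bar>a\<bar>^3"
  proof (cases "\<bar>a\<bar> \<le> 2")
    case True
    have "a^2 \<le> 2^2" using True by (metis abs_le_square_iff abs_numeral)
    then have "norm (Nf a) * (1 + a^2) \<le> \<bar>a\<bar>^3 * 5"
      by (intro mult_mono[OF Nf_small]) auto
    then show ?thesis by (smt (verit) zero_le_power abs_ge_zero)
  next
    case False
    have "2^2 \<le> a^2" using False abs_le_square_iff[of 2 a] by simp
    then have "norm (Nf a) * (1 + a^2) \<le> (4 * \<bar>a\<bar>) * (5/4 * a^2)"
      apply (intro mult_mono)
      using Nf_large[of a] False by (auto simp: power2_eq_square)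
    also have "\<dots> = 5 * \<bar>a\<bar>^3" by (simp add: power2_eq_square power3_eq_cube abs_mult_self_eq)
    finally show ?thesis by (smt (verit) zero_le_power abs_ge_zero)
  qed
  have "norm (Wf s t) = norm (Nf a) / \<bar>t\<bar>^3"
    using t by (simp add: Wf_Nf a_def norm_divide norm_power)
  also have "\<dots> \<le> 6 * \<bar>a\<bar>^3 / (1 + a^2) / \<bar>t\<bar>^3"
    using key t by (intro divide_right_mono) (auto simp: field_simps add_pos_nonneg)
  also have "\<dots> = 6 * \<bar>s\<bar>^3 / (1 + a^2)"
  proof -
    have ha: "\<bar>a\<bar>^3 = \<bar>s\<bar>^3 * \<bar>t\<bar>^3" by (simp add: a_def abs_mult power_mult_distrib)
    have "1 + a^2 > 0" by (simp add: add_pos_nonneg)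
    moreover have "\<bar>t\<bar>^3 > 0" using t by simp
    ultimately show ?thesis unfolding ha
      by (metis (no_types, lifting) divide_divide_eq_left mult.commute nonzero_mult_div_cancel_left
          order_less_irrefl times_divide_eq_right)
  qed
  also have "\<dots> = 6 * \<bar>s\<bar>^3 / (1 + (s*t)^2)" by (simp add: a_def)
  finally show ?thesis .
qed

lemma Wf_bound2: "t \<noteq> 0 \<Longrightarrow> norm (Wf s t) \<le> (2 * \<bar>s\<bar> * \<bar>t\<bar> + 4) / \<bar>t\<bar>^3"
  using Nf_large[of "s*t"]
  by (simp add: Wf_Nf norm_divide norm_power abs_mult divide_right_mono)

lemma vs_lim: "(vs s \<longlongrightarrow> 0) at_top"
proof (rule Lim_null_comparison)
  show "\<forall>\<^sub>F t in at_top. norm (vs s t) \<le> 2 / t^2 + \<bar>s\<bar> / t"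
    using eventually_gt_at_top[of 0]
  proof eventually_elim
    case (elim t)
    have "norm (1 - \<i> * of_real (s*t) - exp (- \<i> * of_real (s*t))) \<le> 1 + \<bar>s*t\<bar> + 1"
      by (rule order_trans[OF norm_triangle_ineq4] order_trans[OF norm_triangle_ineq4] add_mono)+
         (auto simp: norm_mult norm_exp_ii)
    then have "norm (vs s t) \<le> (2 + \<bar>s\<bar> * t) / t^2"
      using elim by (simp add: vs_def norm_divide norm_power abs_mult divide_right_mono)
    also have "\<dots> = 2 / t^2 + \<bar>s\<bar> / t" using elim by (simp add: field_simps power2_eq_square)
    finally show ?case .
  qed
  have a: "((\<lambda>t::real. 2 / t^2) \<longlongrightarrow> (0::real)) at_top"
    by (intro tendsto_divide_0[OF tendsto_const] filterlim_at_top_imp_at_infinity filterlim_pow_at_top filterlim_ident) simp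
  have b: "((\<lambda>t::real. \<bar>s\<bar> / t) \<longlongrightarrow> (0::real)) at_top"
    by (intro tendsto_divide_0[OF tendsto_const] filterlim_at_top_imp_at_infinity filterlim_ident)
  show "((\<lambda>t. 2 / t^2 + \<bar>s\<bar> / t) \<longlongrightarrow> 0) at_top" using tendsto_add[OF a b] by simp
qed

lemma Omega_eq: "Omega F s = - (\<integral>t. F t * Wf s t \<partial>lborel)"
proof -
  have "Lim at_top (vs s) = 0" using vs_lim by (rule tendsto_Lim[rotated]) simp
  moreover have "(\<integral>t. F t * vector_derivative (vs s) (at t) \<partial>lborel) = (\<integral>t. F t * Wf s t \<partial>lborel)"
    by (rule integral_discrete_difference[where X="{0}"]) (auto simp: vector_derivative_at[OF vs_deriv])
  ultimately show ?thesis unfolding Omega_def Ac_int_def by simp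
qed

definition W1 :: "real \<Rightarrow> real \<Rightarrow> complex" where
  "W1 s t = \<i> / of_real (t^2) - \<i> * exp (- \<i> * of_real (s*t)) / of_real (t^2)
     + of_real s * exp (- \<i> * of_real (s*t)) / of_real t"

lemma Wf_deriv_s:
  assumes t: "t \<noteq> 0"
  shows "((\<lambda>s. Wf s t) has_vector_derivative W1 s t) (at s)"
proof -
  define T where "T = complex_of_real t"
  define C where "C = T^2"
  have T: "T \<noteq> 0" using t by (simp add: T_def)
  have C: "C \<noteq> 0" using T by (simp add: C_def)
  define Wc where "Wc z = (\<i> * z * (1 + exp (- \<i> * (z * T))) - 2 * (1 - exp (- \<i> * (z * T))) / T) / C" for z
  have "(Wc has_field_derivative W1 s t) (at (of_real s))"
    unfolding Wc_def using T C
    by (auto intro!: derivative_eq_intros simp: W1_def C_def T_def field_simps power2_eq_square)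
  then have 1: "((\<lambda>x. Wc (of_real x)) has_vector_derivative W1 s t) (at s)"
    by (rule has_vector_derivative_real_field)
  moreover have "Wc (of_real x) = Wf x t" for x
    unfolding Wc_def Wf_def T_def C_def by simp
  ultimately show ?thesis by simp
qed

lemma W1_deriv_s:
  assumes t: "t \<noteq> 0"
  shows "((\<lambda>s. W1 s t) has_vector_derivative (- \<i> * of_real s * exp (- \<i> * of_real (s*t)))) (at s)"
proof -
  define T where "T = complex_of_real t"
  define C where "C = T^2"
  have T: "T \<noteq> 0" using t by (simp add: T_def)
  have C: "C \<noteq> 0" using T by (simp add: C_def)
  define Wc where "Wc z = \<i> / C - \<i> * exp (- \<i> * (z * T)) / C + z * exp (- \<i> * (z * T)) / T" for z
  have "(Wc has_field_derivative (- \<i> * of_real s * exp (- \<i> * of_real (s*t)))) (at (of_real s))"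
    unfolding Wc_def using T C
    by (auto intro!: derivative_eq_intros simp: C_def T_def field_simps power2_eq_square)
  then have "((\<lambda>x. Wc (of_real x)) has_vector_derivative (- \<i> * of_real s * exp (- \<i> * of_real (s*t)))) (at s)"
    by (rule has_vector_derivative_real_field)
  moreover have "Wc (of_real x) = W1 x t" for x
    unfolding Wc_def W1_def T_def C_def by simp
  ultimately show ?thesis by simp
qed

lemma W1_bound: "t \<noteq> 0 \<Longrightarrow> norm (W1 s t) \<le> 2 / t^2 + \<bar>s\<bar> / \<bar>t\<bar>"
proof -
  assume t: "t \<noteq> 0"
  have tri: "norm (A - B + C) \<le> norm A + norm B + norm C" for A B C :: complex
    by (metis add_mono norm_triangle_ineq norm_triangle_ineq4 order_trans order_refl)
  have 1: "norm (\<i> / complex_of_real (t^2)) = 1 / t^2"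
    by (simp add: norm_divide norm_power)
  have 2: "norm (\<i> * exp (- \<i> * of_real (s*t)) / complex_of_real (t^2)) = 1 / t^2"
    unfolding norm_divide norm_mult norm_exp_ii by (simp add: norm_power)
  have 3: "norm (of_real s * exp (- \<i> * of_real (s*t)) / complex_of_real t) = \<bar>s\<bar> / \<bar>t\<bar>"
    unfolding norm_divide norm_mult norm_exp_ii by simp
  show ?thesis unfolding W1_def using tri[of "\<i> / complex_of_real (t^2)"
      "\<i> * exp (- \<i> * of_real (s*t)) / complex_of_real (t^2)"
      "of_real s * exp (- \<i> * of_real (s*t)) / complex_of_real t"] 1 2 3
    by linarith
qed

lemma Wf_meas[measurable]: "(\<lambda>p. Wf (fst p) (snd p)) \<in> borel_measurable (lborel \<Otimes>\<^sub>M lborel)"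
  unfolding Wf_def by (intro borel_measurable_divide borel_measurable_diff borel_measurable_times; measurable)


lemma Bc_bounded:
  assumes "F \<in> Bc" shows "\<exists>B. \<forall>t. norm (F t) \<le> B"
proof -
  from assms obtain L where cont: "continuous_on UNIV F" and L: "(F \<longlongrightarrow> L) at_top"
    and z: "(F \<longlongrightarrow> 0) at_bot" unfolding Bc_def by auto
  have "eventually (\<lambda>t. norm (F t) < norm L + 1) at_top"
    using order_tendstoD(2)[OF tendsto_norm[OF L], of "norm L + 1"] by simp
  then obtain b where b: "\<And>t. t \<ge> b \<Longrightarrow> norm (F t) < norm L + 1"
    by (auto simp: eventually_at_top_linorder)
  have "eventually (\<lambda>t. norm (F t) < 1) at_bot"
    using order_tendstoD(2)[OF tendsto_norm[OF z], of 1] by simp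
  then obtain a where a: "\<And>t. t \<le> a \<Longrightarrow> norm (F t) < 1"
    by (auto simp: eventually_at_bot_linorder)
  have "compact (F ` {a..b})"
    by (rule compact_continuous_image) (use cont continuous_on_subset compact_Icc in auto)
  then obtain M where M: "\<And>x. x \<in> F ` {a..b} \<Longrightarrow> norm x \<le> M"
    using compact_imp_bounded bounded_iff by metis
  have "norm (F t) \<le> max (norm L + 1) (max 1 M)" for t
  proof (cases "t \<le> a")
    case True then show ?thesis using a[of t] by simp
  next
    case False
    show ?thesis
    proof (cases "t \<ge> b")
      case True then show ?thesis using b[of t] by simp
    next
      case False2: False
      then show ?thesis using False M[of "F t"] by auto
    qed
  qed
  then show ?thesis by blast
qed

lemma int_weight:
  fixes g :: "real \<Rightarrow> complex"
  assumes c: "continuous_on UNIV g"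
    and i: "set_integrable lborel {t. 1 < \<bar>t\<bar>} (\<lambda>t. complex_of_real (t^2) * g t)"
    and k: "k \<le> 2"
  shows "integrable lborel (\<lambda>t. complex_of_real (t^k) * g t)"
proof -
  have gm[measurable]: "g \<in> borel_measurable lborel"
    using borel_measurable_continuous_onI[OF c] by simp
  have S[measurable]: "{t::real. 1 < \<bar>t\<bar>} \<in> sets lborel" by measurable
  let ?h = "\<lambda>t. complex_of_real (t^k) * g t"
  have 1: "set_integrable lborel {-1..1} ?h"
    by (rule borel_integrable_atLeastAtMost')
       (intro continuous_intros continuous_on_subset[OF c]; simp)
  have 2: "set_integrable lborel {t. 1 < \<bar>t\<bar>} ?h"
    unfolding set_integrable_def
  proof (rule Bochner_Integration.integrable_bound)
    show "integrable lborel (\<lambda>t. indicator {t. 1 < \<bar>t\<bar>} t *\<^sub>R (complex_of_real (t^2) * g t))"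
      using i unfolding set_integrable_def .
    show "(\<lambda>t. indicator {t. 1 < \<bar>t\<bar>} t *\<^sub>R ?h t) \<in> borel_measurable lborel" by measurable
    show "AE t in lborel. norm (indicator {t. 1 < \<bar>t\<bar>} t *\<^sub>R ?h t)
        \<le> norm (indicator {t. 1 < \<bar>t\<bar>} t *\<^sub>R (complex_of_real (t^2) * g t))"
    proof (rule AE_I2)
      fix t :: real
      show "norm (indicator {t. 1 < \<bar>t\<bar>} t *\<^sub>R ?h t)
        \<le> norm (indicator {t. 1 < \<bar>t\<bar>} t *\<^sub>R (complex_of_real (t^2) * g t))"
      proof (cases "1 < \<bar>t\<bar>")
        case True
        have "\<bar>t\<bar>^k \<le> \<bar>t\<bar>^2" by (rule power_increasing[OF k]) (use True in simp)
        then show ?thesis using True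
          by (simp add: norm_mult norm_power mult_right_mono)
      qed simp
    qed
  qed
  have "set_integrable lborel ({-1..1} \<union> {t. 1 < \<bar>t\<bar>}) ?h"
    by (rule set_integrable_Un[OF 1 2]) auto
  moreover have "{-1..1} \<union> {t::real. 1 < \<bar>t\<bar>} = UNIV" by auto
  ultimately show ?thesis by (simp add: set_integrable_def)
qed

lemma integrable_tendsto_zero_top:
  fixes h :: "real \<Rightarrow> complex"
  assumes h: "integrable lborel h" and L: "(h \<longlongrightarrow> L) at_top"
  shows "L = 0"
proof (rule ccontr)
  assume L0: "L \<noteq> 0"
  define c where "c = norm L / 2"
  have c: "c > 0" using L0 by (simp add: c_def)
  have "eventually (\<lambda>t. c < norm (h t)) at_top"
    using order_tendstoD(1)[OF tendsto_norm[OF L], of c] L0 by (simp add: c_def)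
  then obtain N where N: "\<And>t. t \<ge> N \<Longrightarrow> c < norm (h t)"
    by (auto simp: eventually_at_top_linorder)
  define M where "M = (\<integral>t. norm (h t) \<partial>lborel)"
  have bound: "real n * c \<le> M" for n :: nat
  proof -
    have "(\<integral>t. indicator {N..N + real n} t * c \<partial>lborel) = real n * c"
      by simp
    moreover have "(\<integral>t. indicator {N..N + real n} t * c \<partial>lborel) \<le> M"
      unfolding M_def
    proof (rule integral_mono)
      show "integrable lborel (\<lambda>t. indicator {N..N + real n} t * c)" by simp
      show "integrable lborel (\<lambda>t. norm (h t))" using h by simp
      fix t show "indicator {N..N + real n} t * c \<le> norm (h t)"
        using N[of t] c by (auto split: split_indicator)
    qed
    ultimately show ?thesis by simp
  qed
  obtain n :: nat where "M < real n * c" using ex_less_of_nat_mult[OF c] by blast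
  with bound[of n] show False by simp
qed

lemma integrable_tendsto_zero_bot:
  fixes h :: "real \<Rightarrow> complex"
  assumes h: "integrable lborel h" and L: "(h \<longlongrightarrow> L) at_bot"
  shows "L = 0"
proof (rule integrable_tendsto_zero_top)
  show "integrable lborel (\<lambda>t. h (-t))"
    using lborel_integrable_real_affine[OF h, of "-1" 0] by simp
  show "((\<lambda>t. h (-t)) \<longlongrightarrow> L) at_top"
    by (rule filterlim_compose[OF L filterlim_uminus_at_bot_at_top])
qed

lemma ibp0:
  fixes h h' :: "real \<Rightarrow> complex"
  assumes d: "\<And>x. (h has_vector_derivative h' x) (at x)" and c: "continuous_on UNIV h'"
    and ih: "integrable lborel h" and ih': "integrable lborel h'"
  shows "(\<integral>x. h' x \<partial>lborel) = 0"
proof -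
  have ftc: "set_lebesgue_integral lborel {a..b} h' = h b - h a" if "a \<le> b" for a b
  proof -
    have "(LBINT x=a..b. h' x) = h b - h a"
      by (rule interval_integral_FTC_finite)
         (use that in \<open>auto intro: continuous_on_subset[OF c] has_vector_derivative_at_within[OF d]\<close>)
    then show ?thesis using that by (simp add: interval_integral_Icc)
  qed
  have si: "set_integrable lborel A h'" if "A \<in> sets lborel" for A
    unfolding set_integrable_def using that ih' by (rule integrable_mult_indicator)
  define Ip where "Ip = set_lebesgue_integral lborel {0..} h'"
  define Im where "Im = set_lebesgue_integral lborel {..0} h'"
  have "((\<lambda>b. set_lebesgue_integral lborel {0..b} h') \<longlongrightarrow> Ip) at_top"
    unfolding Ip_def by (rule tendsto_set_lebesgue_integral_at_top) (auto intro: si)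
  then have "((\<lambda>b. h 0 + set_lebesgue_integral lborel {0..b} h') \<longlongrightarrow> h 0 + Ip) at_top"
    by (intro tendsto_intros)
  moreover have "eventually (\<lambda>b. h 0 + set_lebesgue_integral lborel {0..b} h' = h b) at_top"
    using eventually_ge_at_top[of 0] by eventually_elim (simp add: ftc)
  ultimately have "(h \<longlongrightarrow> h 0 + Ip) at_top" by (rule Lim_transform_eventually)
  then have p: "h 0 + Ip = 0" by (rule integrable_tendsto_zero_top[OF ih])
  have "((\<lambda>a. set_lebesgue_integral lborel {a..0} h') \<longlongrightarrow> Im) at_bot"
    unfolding Im_def by (rule tendsto_set_lebesgue_integral_at_bot) (auto intro: si)
  then have "((\<lambda>a. h 0 - set_lebesgue_integral lborel {a..0} h') \<longlongrightarrow> h 0 - Im) at_bot"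
    by (intro tendsto_intros)
  moreover have "eventually (\<lambda>a. h 0 - set_lebesgue_integral lborel {a..0} h' = h a) at_bot"
    using eventually_le_at_bot[of 0] by eventually_elim (simp add: ftc)
  ultimately have "(h \<longlongrightarrow> h 0 - Im) at_bot" by (rule Lim_transform_eventually)
  then have m: "h 0 - Im = 0" by (rule integrable_tendsto_zero_bot[OF ih])
  have Ip': "Ip = set_lebesgue_integral lborel {0<..} h'"
    unfolding Ip_def set_lebesgue_integral_def
    by (rule integral_discrete_difference[where X="{0}"]) (auto split: split_indicator)
  have U: "{..0} \<union> {0<..} = (UNIV :: real set)" by auto
  have "(\<integral>x. h' x \<partial>lborel) = set_lebesgue_integral lborel ({..0} \<union> {0<..}) h'"
    unfolding U by (simp add: set_lebesgue_integral_def)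
  also have "\<dots> = Im + set_lebesgue_integral lborel {0<..} h'"
    unfolding Im_def by (rule set_integral_Un) (auto intro: si)
  also have "\<dots> = 0" using p m Ip' by (simp add: algebra_simps)
  finally show ?thesis .
qed


lemma norm_exp_diff: "norm (exp (\<i> * of_real a) - exp (\<i> * of_real b)) \<le> \<bar>a - b\<bar>"
proof -
  have "exp (\<i> * of_real a) - exp (\<i> * of_real b) = exp (\<i> * of_real b) * (exp (\<i> * of_real (a - b)) - 1)"
    by (simp add: algebra_simps exp_add[symmetric])
  also have "norm \<dots> = norm (exp (\<i> * of_real (a - b)) - 1)"
    by (simp add: norm_mult norm_exp_i_times)
  also have "\<dots> \<le> \<bar>a - b\<bar>" using iexp_approx1[of "a - b" 0] by simp
  finally show ?thesis .
qed

lemma param_deriv: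
  fixes f f' :: "real \<Rightarrow> real \<Rightarrow> complex" and w :: "real \<Rightarrow> real"
  assumes mf: "\<And>s. f s \<in> borel_measurable lborel" and mf': "\<And>s. f' s \<in> borel_measurable lborel"
    and fi: "\<And>s. integrable lborel (f s)"
    and w: "integrable lborel w"
    and der: "\<And>s t. ((\<lambda>s. f s t) has_vector_derivative f' s t) (at s)"
    and lip: "\<And>s s' t. norm (f s t - f s' t) \<le> \<bar>s - s'\<bar> * w t"
    and bd: "\<And>s t. norm (f' s t) \<le> w t"
  shows "((\<lambda>s. \<integral>t. f s t \<partial>lborel) has_vector_derivative (\<integral>t. f' x t \<partial>lborel)) (at x)"
proof -
  have w0: "0 \<le> w t" for t using bd[of x t] norm_ge_zero order_trans by blast
  have fi': "integrable lborel (f' s)" for s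
    by (rule Bochner_Integration.integrable_bound[OF w mf']) (use bd w0 in auto)
  define q where "q y t = norm (f y t - f x t - (y - x) *\<^sub>R f' x t) / \<bar>y - x\<bar>" for y t
  have qm: "q y \<in> borel_measurable lborel" for y
    unfolding q_def using mf[of y] mf[of x] mf'[of x] by measurable
  have Q: "((\<lambda>y. \<integral>t. q y t \<partial>lborel) \<longlongrightarrow> 0) (at x)"
    unfolding tendsto_at_iff_sequentially comp_def
  proof (intro allI impI)
    fix X :: "nat \<Rightarrow> real" assume X: "\<forall>i. X i \<in> UNIV - {x}" "X \<longlonglongrightarrow> x"
    define z :: "real \<Rightarrow> real" where "z = (\<lambda>t. 0)"
    have "(\<lambda>n. \<integral>t. q (X n) t \<partial>lborel) \<longlonglongrightarrow> integral\<^sup>L lborel z"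
    proof (rule integral_dominated_convergence)
      show "z \<in> borel_measurable lborel" by (simp add: z_def)
      show "(\<lambda>t. q (X n) t) \<in> borel_measurable lborel" for n using qm by simp
      show "integrable lborel (\<lambda>t. 2 * w t)" using w by simp
      show "AE t in lborel. (\<lambda>n. q (X n) t) \<longlonglongrightarrow> z t"
      proof (rule AE_I2)
        fix t
        have "((\<lambda>y. q y t) \<longlongrightarrow> 0) (at x)"
          using der[of t x] unfolding has_vector_derivative_def has_derivative_iff_norm q_def
          by simp
        then show "(\<lambda>n. q (X n) t) \<longlonglongrightarrow> z t" using X unfolding tendsto_at_iff_sequentially comp_def z_def
          by auto
      qed
      show "AE t in lborel. norm (q (X n) t) \<le> 2 * w t" for n
      proof (rule AE_I2)
        fix t
        have xn: "\<bar>X n - x\<bar> > 0" using X by auto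
        have "norm (f (X n) t - f x t - (X n - x) *\<^sub>R f' x t) \<le> \<bar>X n - x\<bar> * w t + \<bar>X n - x\<bar> * w t"
          by (rule order_trans[OF norm_triangle_ineq4], rule add_mono[OF lip])
             (simp add: bd mult_left_mono)
        then show "norm (q (X n) t) \<le> 2 * w t" using xn unfolding q_def
          by (simp add: divide_le_eq algebra_simps)
      qed
    qed
    then show "(\<lambda>n. \<integral>t. q (X n) t \<partial>lborel) \<longlonglongrightarrow> 0" by (simp add: z_def)
  qed
  have "((\<lambda>y. norm ((\<integral>t. f y t \<partial>lborel) - (\<integral>t. f x t \<partial>lborel) - (y - x) *\<^sub>R (\<integral>t. f' x t \<partial>lborel)) / \<bar>y - x\<bar>) \<longlongrightarrow> 0) (at x)"
  proof (rule Lim_null_comparison[OF _ Q], intro always_eventually allI)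
    fix y
    have "(\<integral>t. f y t \<partial>lborel) - (\<integral>t. f x t \<partial>lborel) - (y - x) *\<^sub>R (\<integral>t. f' x t \<partial>lborel)
        = (\<integral>t. f y t - f x t - (y - x) *\<^sub>R f' x t \<partial>lborel)"
      using fi[of y] fi[of x] fi'[of x] by simp
    then have "norm ((\<integral>t. f y t \<partial>lborel) - (\<integral>t. f x t \<partial>lborel) - (y - x) *\<^sub>R (\<integral>t. f' x t \<partial>lborel))
        \<le> (\<integral>t. norm (f y t - f x t - (y - x) *\<^sub>R f' x t) \<partial>lborel)"
      by (simp add: integral_norm_bound)
    then have "norm ((\<integral>t. f y t \<partial>lborel) - (\<integral>t. f x t \<partial>lborel) - (y - x) *\<^sub>R (\<integral>t. f' x t \<partial>lborel)) / \<bar>y - x\<bar>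
        \<le> (\<integral>t. norm (f y t - f x t - (y - x) *\<^sub>R f' x t) \<partial>lborel) / \<bar>y - x\<bar>"
      by (rule divide_right_mono) simp
    also have "\<dots> = (\<integral>t. q y t \<partial>lborel)" unfolding q_def by simp
    finally show "norm (norm ((\<integral>t. f y t \<partial>lborel) - (\<integral>t. f x t \<partial>lborel) - (y - x) *\<^sub>R (\<integral>t. f' x t \<partial>lborel)) / \<bar>y - x\<bar>)
        \<le> (\<integral>t. q y t \<partial>lborel)" by simp
  qed
  then show ?thesis
    unfolding has_vector_derivative_def has_derivative_iff_norm
    by (simp add: bounded_linear_scaleR_left)
qed

lemma param_cont:
  fixes f :: "real \<Rightarrow> real \<Rightarrow> complex" and w :: "real \<Rightarrow> real"
  assumes mf: "\<And>s. f s \<in> borel_measurable lborel"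
    and w: "integrable lborel w"
    and c: "\<And>t. continuous_on UNIV (\<lambda>s. f s t)"
    and bd: "\<And>s t. norm (f s t) \<le> w t"
  shows "continuous_on UNIV (\<lambda>s. \<integral>t. f s t \<partial>lborel)"
proof -
  have "continuous (at x) (\<lambda>s. \<integral>t. f s t \<partial>lborel)" for x
  proof (rule continuous_at_sequentiallyI)
    fix u :: "nat \<Rightarrow> real" assume u: "u \<longlonglongrightarrow> x"
    show "(\<lambda>n. \<integral>t. f (u n) t \<partial>lborel) \<longlonglongrightarrow> (\<integral>t. f x t \<partial>lborel)"
    proof (rule integral_dominated_convergence[where w=w])
      show "(\<lambda>t. f (u n) t) \<in> borel_measurable lborel" for n using mf by simp
      show "f x \<in> borel_measurable lborel" using mf by simp
      show "AE t in lborel. (\<lambda>n. f (u n) t) \<longlonglongrightarrow> f x t"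
      proof (rule AE_I2)
        fix t
        have "isCont (\<lambda>s. f s t) x" using c[of t] by (simp add: continuous_on_eq_continuous_at)
        then show "(\<lambda>n. f (u n) t) \<longlonglongrightarrow> f x t" using u by (rule isCont_tendsto_compose)
      qed
      show "AE t in lborel. norm (f (u n) t) \<le> w t" for n using bd by simp
    qed fact
  qed
  then show ?thesis by (simp add: continuous_on_eq_continuous_at)
qed

lemma prod_int:
  fixes a b :: "real \<Rightarrow> real"
  assumes a: "integrable lborel a" and b: "integrable lborel b"
  shows "integrable (lborel \<Otimes>\<^sub>M lborel) (\<lambda>p. a (fst p) * b (snd p))"
proof (rule lborel_pair.Fubini_integrable)
  have [measurable]: "a \<in> borel_measurable lborel" "b \<in> borel_measurable lborel"
    using a b by auto
  show "(\<lambda>p. a (fst p) * b (snd p)) \<in> borel_measurable (lborel \<Otimes>\<^sub>M lborel)"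
    by measurable
  have "integrable lborel (\<lambda>x. \<bar>a x\<bar> * (\<integral>y. \<bar>b y\<bar> \<partial>lborel))"
    using a by (intro integrable_mult_left) simp
  then show "integrable lborel (\<lambda>x. \<integral>y. norm (a (fst (x, y)) * b (snd (x, y))) \<partial>lborel)"
    by (simp add: abs_mult)
  show "AE x in lborel. integrable lborel (\<lambda>y. a (fst (x, y)) * b (snd (x, y)))"
    using b by simp
qed

lemma shear_int:
  fixes a b :: "real \<Rightarrow> real"
  assumes a: "integrable lborel a" and b: "integrable lborel b"
  shows "integrable (lborel \<Otimes>\<^sub>M lborel) (\<lambda>p. a (fst p) * b (fst p + snd p))"
proof (rule lborel_pair.Fubini_integrable)
  have [measurable]: "a \<in> borel_measurable lborel" "b \<in> borel_measurable lborel"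
    using a b by auto
  show "(\<lambda>p. a (fst p) * b (fst p + snd p)) \<in> borel_measurable (lborel \<Otimes>\<^sub>M lborel)"
    by measurable
  have sh: "(\<integral>y. \<bar>b (x + y)\<bar> \<partial>lborel) = (\<integral>y. \<bar>b y\<bar> \<partial>lborel)" for x
    using lborel_integral_real_affine[of 1 "\<lambda>y. \<bar>b y\<bar>" x] by simp
  have "integrable lborel (\<lambda>x. \<bar>a x\<bar> * (\<integral>y. \<bar>b y\<bar> \<partial>lborel))"
    using a by (intro integrable_mult_left) simp
  then show "integrable lborel (\<lambda>x. \<integral>y. norm (a (fst (x, y)) * b (fst (x, y) + snd (x, y))) \<partial>lborel)"
    by (simp add: abs_mult sh)
  show "AE x in lborel. integrable lborel (\<lambda>y. a (fst (x, y)) * b (fst (x, y) + snd (x, y)))"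
    using lborel_integrable_real_affine[OF b, of 1] by simp
qed


lemma cont_int:
  fixes g :: "real \<Rightarrow> complex"
  assumes c: "continuous_on UNIV g"
    and i: "set_integrable lborel {t. 1 < \<bar>t\<bar>} (\<lambda>t. complex_of_real (t^2) * g t)"
  shows "integrable lborel g" "integrable lborel (\<lambda>s. of_real s * g s)"
    "integrable lborel (\<lambda>s. of_real (s^2) * g s)"
    "integrable lborel (\<lambda>s. norm (g s))" "integrable lborel (\<lambda>s. \<bar>s\<bar> * norm (g s))"
    "integrable lborel (\<lambda>s. s^2 * norm (g s))"
proof -
  show 0: "integrable lborel g" using int_weight[OF c i, of 0] by simp
  show 1: "integrable lborel (\<lambda>s. of_real s * g s)" using int_weight[OF c i, of 1] by simp
  show 2: "integrable lborel (\<lambda>s. of_real (s^2) * g s)" using int_weight[OF c i, of 2] by simp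
  show "integrable lborel (\<lambda>s. norm (g s))" using integrable_norm[OF 0] .
  show "integrable lborel (\<lambda>s. \<bar>s\<bar> * norm (g s))" using integrable_norm[OF 1] by (simp add: norm_mult)
  show "integrable lborel (\<lambda>s. s^2 * norm (g s))" using integrable_norm[OF 2] by (simp add: norm_mult norm_power)
qed

lemma inv_sq_int: "integrable lborel (\<lambda>x::real. inverse (1 + x^2))"
    "(\<integral>x. inverse (1 + x^2) \<partial>lborel) = pi"
proof -
  have U: "einterval (-\<infinity>) \<infinity> = UNIV" by (auto simp: einterval_def)
  show "integrable lborel (\<lambda>x::real. inverse (1 + x^2))"
    using integrable_inverse_1_plus_square unfolding U set_integrable_def by simp
  show "(\<integral>x. inverse (1 + x^2) \<partial>lborel) = pi"
    using LBINT_inverse_1_plus_square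
    unfolding interval_lebesgue_integral_def U set_lebesgue_integral_def by simp
qed

lemma inv_sq_scaled:
  assumes s: "s \<noteq> 0"
  shows "integrable lborel (\<lambda>t. inverse (1 + (s*t)^2))"
    "(\<integral>t. inverse (1 + (s*t)^2) \<partial>lborel) = pi / \<bar>s\<bar>"
proof -
  show "integrable lborel (\<lambda>t. inverse (1 + (s*t)^2))"
    using lborel_integrable_real_affine[OF inv_sq_int(1) s, of 0] by simp
  have "pi = \<bar>s\<bar> * (\<integral>t. inverse (1 + (s*t)^2) \<partial>lborel)"
    using lborel_integral_real_affine[OF s, of "\<lambda>x. inverse (1 + x^2)" 0] inv_sq_int(2) by simp
  then show "(\<integral>t. inverse (1 + (s*t)^2) \<partial>lborel) = pi / \<bar>s\<bar>"
    using s by (simp add: field_simps)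
qed

definition good :: "(real \<Rightarrow> complex) \<Rightarrow> (real \<Rightarrow> complex) \<Rightarrow> (real \<Rightarrow> complex) \<Rightarrow> bool" where
  "good \<phi> \<phi>1 \<phi>2 \<longleftrightarrow> (\<forall>t. (\<phi> has_vector_derivative \<phi>1 t) (at t)) \<and> (\<forall>t. (\<phi>1 has_vector_derivative \<phi>2 t) (at t))
     \<and> continuous_on UNIV \<phi>2
     \<and> set_integrable lborel {t. 1 < \<bar>t\<bar>} (\<lambda>t. complex_of_real (t^2) * \<phi> t)
     \<and> set_integrable lborel {t. 1 < \<bar>t\<bar>} (\<lambda>t. complex_of_real (t^2) * \<phi>1 t)
     \<and> set_integrable lborel {t. 1 < \<bar>t\<bar>} (\<lambda>t. complex_of_real (t^2) * \<phi>2 t)"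

lemma good_D:
  assumes "good \<phi> \<phi>1 \<phi>2"
  shows "\<And>t. (\<phi> has_vector_derivative \<phi>1 t) (at t)" "\<And>t. (\<phi>1 has_vector_derivative \<phi>2 t) (at t)"
    "continuous_on UNIV \<phi>" "continuous_on UNIV \<phi>1" "continuous_on UNIV \<phi>2"
    "set_integrable lborel {t. 1 < \<bar>t\<bar>} (\<lambda>t. complex_of_real (t^2) * \<phi> t)"
    "set_integrable lborel {t. 1 < \<bar>t\<bar>} (\<lambda>t. complex_of_real (t^2) * \<phi>1 t)"
    "set_integrable lborel {t. 1 < \<bar>t\<bar>} (\<lambda>t. complex_of_real (t^2) * \<phi>2 t)"
  using assms unfolding good_def
  by (auto intro!: continuous_on_vector_derivative simp: has_vector_derivative_at_within)

definition KK :: "(real \<Rightarrow> complex) \<Rightarrow> real \<Rightarrow> complex" where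
  "KK \<phi> t = (\<integral>s. \<i> * of_real s * exp (- \<i> * of_real (s*t)) * \<phi> s \<partial>lborel)"

definition Ct :: "real \<Rightarrow> real" where "Ct t = 2 / t^2 + 4 / \<bar>t\<bar>^3 + 1 / \<bar>t\<bar>"

lemma Wf_lin: assumes t: "t \<noteq> 0" shows "norm (Wf s t) \<le> Ct t * (1 + \<bar>s\<bar>)"
proof -
  define u where "u = 1 / \<bar>t\<bar>"
  have u: "u > 0" using t by (simp add: u_def)
  have e: "(2 * \<bar>s\<bar> * \<bar>t\<bar> + 4) / \<bar>t\<bar>^3 = 2 * \<bar>s\<bar> * u^2 + 4 * u^3"
    using t by (simp add: u_def field_simps power2_eq_square power3_eq_cube)
  have c: "Ct t = 2 * u^2 + 4 * u^3 + u"
    using t by (simp add: u_def Ct_def field_simps power2_eq_square power3_eq_cube)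
  have "2 * \<bar>s\<bar> * u^2 + 4 * u^3 \<le> (2 * u^2 + 4 * u^3 + u) * (1 + \<bar>s\<bar>)"
    using u by (simp add: algebra_simps add_nonneg_nonneg)
  then show ?thesis using Wf_bound2[OF t, of s] e c by simp
qed

lemma W1_lin: assumes t: "t \<noteq> 0" shows "norm (W1 s t) \<le> Ct t * (1 + \<bar>s\<bar>)"
proof -
  define u where "u = 1 / \<bar>t\<bar>"
  have u: "u > 0" using t by (simp add: u_def)
  have e: "2 / t^2 + \<bar>s\<bar> / \<bar>t\<bar> = 2 * u^2 + \<bar>s\<bar> * u"
    using t by (simp add: u_def field_simps power2_eq_square)
  have c: "Ct t = 2 * u^2 + 4 * u^3 + u"
    using t by (simp add: u_def Ct_def field_simps power2_eq_square power3_eq_cube)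
  have "2 * u^2 + \<bar>s\<bar> * u \<le> (2 * u^2 + 4 * u^3 + u) * (1 + \<bar>s\<bar>)"
    using u by (simp add: algebra_simps add_nonneg_nonneg)
  then show ?thesis using W1_bound[OF t, of s] e c by simp
qed

lemma Wf_cont_s: "t \<noteq> 0 \<Longrightarrow> continuous_on UNIV (\<lambda>s. Wf s t)"
  by (rule continuous_on_vector_derivative[where f'="\<lambda>s. W1 s t"]) (simp add: has_vector_derivative_at_within Wf_deriv_s)

lemma W1_cont_s: assumes t: "t \<noteq> 0" shows "continuous_on UNIV (\<lambda>s. W1 s t)"
  by (rule continuous_on_vector_derivative, rule has_vector_derivative_at_within, rule W1_deriv_s[OF t])

lemma K_identity:
  assumes g: "good \<phi> \<phi>1 \<phi>2" and t: "t \<noteq> 0"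
  shows "(\<integral>s. \<phi>2 s * Wf s t \<partial>lborel) = - KK \<phi> t"
proof -
  note G = good_D[OF g]
  note I0 = cont_int[OF G(3) G(6)] and I1 = cont_int[OF G(4) G(7)] and I2 = cont_int[OF G(5) G(8)]
  define E where "E s = exp (- \<i> * of_real (s*t))" for s
  define h where "h = (\<lambda>s. \<phi>1 s * Wf s t - \<phi> s * W1 s t)"
  define h' where "h' = (\<lambda>s. \<phi>2 s * Wf s t + \<i> * of_real s * E s * \<phi> s)"
  have hd: "(h has_vector_derivative h' s) (at s)" for s
  proof -
    have "(h has_vector_derivative ((\<phi>1 s * W1 s t + \<phi>2 s * Wf s t) - (\<phi> s * (- \<i> * of_real s * exp (- \<i> * of_real (s*t))) + \<phi>1 s * W1 s t))) (at s)"
      unfolding h_def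
      by (intro has_vector_derivative_diff has_vector_derivative_mult G(1) G(2) Wf_deriv_s[OF t] W1_deriv_s[OF t])
    then show ?thesis by (simp add: h'_def E_def algebra_simps)
  qed
  have cE: "continuous_on UNIV E" unfolding E_def by (intro continuous_intros)
  have h'c: "continuous_on UNIV h'"
    unfolding h'_def by (intro continuous_intros G(3) G(5) Wf_cont_s[OF t] cE)
  have hc: "continuous_on UNIV h"
    unfolding h_def by (intro continuous_intros G(3) G(4) Wf_cont_s[OF t] W1_cont_s[OF t])
  have nE: "norm (E s) = 1" for s unfolding E_def by (rule norm_exp_ii)
  have hi: "integrable lborel h"
  proof (rule Bochner_Integration.integrable_bound)
    show "integrable lborel (\<lambda>s. Ct t * (norm (\<phi>1 s) + \<bar>s\<bar> * norm (\<phi>1 s) + norm (\<phi> s) + \<bar>s\<bar> * norm (\<phi> s)))"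
      by (intro integrable_mult_right Bochner_Integration.integrable_add I0 I1)
    show "h \<in> borel_measurable lborel" using borel_measurable_continuous_onI[OF hc] by simp
    show "AE s in lborel. norm (h s) \<le> norm (Ct t * (norm (\<phi>1 s) + \<bar>s\<bar> * norm (\<phi>1 s) + norm (\<phi> s) + \<bar>s\<bar> * norm (\<phi> s)))"
    proof (rule AE_I2)
      fix s
      have C: "0 \<le> Ct t" by (simp add: Ct_def)
      have "norm (h s) \<le> norm (\<phi>1 s) * norm (Wf s t) + norm (\<phi> s) * norm (W1 s t)"
        unfolding h_def by (rule order_trans[OF norm_triangle_ineq4]) (simp add: norm_mult)
      also have "\<dots> \<le> norm (\<phi>1 s) * (Ct t * (1 + \<bar>s\<bar>)) + norm (\<phi> s) * (Ct t * (1 + \<bar>s\<bar>))"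
        by (intro add_mono mult_left_mono Wf_lin[OF t] W1_lin[OF t]) auto
      also have "\<dots> = Ct t * (norm (\<phi>1 s) + \<bar>s\<bar> * norm (\<phi>1 s) + norm (\<phi> s) + \<bar>s\<bar> * norm (\<phi> s))"
        by (simp add: algebra_simps)
      finally show "norm (h s) \<le> norm (Ct t * (norm (\<phi>1 s) + \<bar>s\<bar> * norm (\<phi>1 s) + norm (\<phi> s) + \<bar>s\<bar> * norm (\<phi> s)))"
        using C by simp
    qed
  qed
  have i1: "integrable lborel (\<lambda>s. \<phi>2 s * Wf s t)"
  proof (rule Bochner_Integration.integrable_bound)
    show "integrable lborel (\<lambda>s. Ct t * (norm (\<phi>2 s) + \<bar>s\<bar> * norm (\<phi>2 s)))"
      by (intro integrable_mult_right Bochner_Integration.integrable_add I2)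
    show "(\<lambda>s. \<phi>2 s * Wf s t) \<in> borel_measurable lborel"
      using borel_measurable_continuous_onI[OF continuous_on_mult[OF G(5) Wf_cont_s[OF t]]] by simp
    show "AE s in lborel. norm (\<phi>2 s * Wf s t) \<le> norm (Ct t * (norm (\<phi>2 s) + \<bar>s\<bar> * norm (\<phi>2 s)))"
    proof (rule AE_I2)
      fix s
      have C: "0 \<le> Ct t" by (simp add: Ct_def)
      have "norm (\<phi>2 s * Wf s t) \<le> norm (\<phi>2 s) * (Ct t * (1 + \<bar>s\<bar>))"
        unfolding norm_mult by (intro mult_left_mono Wf_lin[OF t]) auto
      then show "norm (\<phi>2 s * Wf s t) \<le> norm (Ct t * (norm (\<phi>2 s) + \<bar>s\<bar> * norm (\<phi>2 s)))"
        using C by (simp add: algebra_simps)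
    qed
  qed
  have i2: "integrable lborel (\<lambda>s. \<i> * of_real s * E s * \<phi> s)"
  proof (rule Bochner_Integration.integrable_bound)
    show "integrable lborel (\<lambda>s. \<bar>s\<bar> * norm (\<phi> s))" by (rule I0)
    have "continuous_on UNIV (\<lambda>s. \<i> * of_real s * E s * \<phi> s)"
      by (intro continuous_intros G(3) cE)
    from borel_measurable_continuous_onI[OF this]
    show "(\<lambda>s. \<i> * of_real s * E s * \<phi> s) \<in> borel_measurable lborel" by simp
    show "AE s in lborel. norm (\<i> * of_real s * E s * \<phi> s) \<le> norm (\<bar>s\<bar> * norm (\<phi> s))"
      by (rule AE_I2) (simp add: norm_mult nE)
  qed
  have h'i: "integrable lborel h'" unfolding h'_def by (intro Bochner_Integration.integrable_add i1 i2)
  have "(\<integral>s. h' s \<partial>lborel) = 0" by (rule ibp0[OF hd h'c hi h'i])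
  moreover have "(\<integral>s. h' s \<partial>lborel) = (\<integral>s. \<phi>2 s * Wf s t \<partial>lborel) + (\<integral>s. \<i> * of_real s * E s * \<phi> s \<partial>lborel)"
    unfolding h'_def by (rule Bochner_Integration.integral_add[OF i1 i2])
  moreover have "(\<integral>s. \<i> * of_real s * E s * \<phi> s \<partial>lborel) = KK \<phi> t"
    unfolding KK_def E_def ..
  ultimately show ?thesis by (simp add: eq_neg_iff_add_eq_0)
qed


lemma fub_int:
  assumes g: "good \<phi> \<phi>1 \<phi>2" and Hm: "H \<in> borel_measurable lborel" and HB: "\<And>t. norm (H t) \<le> B"
  shows "integrable (lborel \<Otimes>\<^sub>M lborel) (\<lambda>(s, t). H t * Wf s t * \<phi>2 s)"
proof -
  note G = good_D[OF g]
  note I2 = cont_int[OF G(5) G(8)]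
  have B0: "0 \<le> B" using HB[of 0] norm_ge_zero order_trans by blast
  have [measurable]: "\<phi>2 \<in> borel_measurable lborel"
    using borel_measurable_continuous_onI[OF G(5)] by simp
  have [measurable]: "H \<in> borel_measurable lborel" by (rule Hm)
  define D where "D = (\<lambda>p::real \<times> real. B * 6 * (\<bar>fst p\<bar>^3 * norm (\<phi>2 (fst p))) * inverse (1 + (fst p * snd p)^2))"
  have D0: "0 \<le> D p" for p unfolding D_def using B0 by (simp add: add_pos_nonneg)
  have DI: "integrable (lborel \<Otimes>\<^sub>M lborel) D"
  proof (rule lborel_pair.Fubini_integrable)
    show "D \<in> borel_measurable (lborel \<Otimes>\<^sub>M lborel)" unfolding D_def by measurable
    have eq: "(\<integral>t. norm (D (s, t)) \<partial>lborel) = B * 6 * pi * (s^2 * norm (\<phi>2 s))" for s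
    proof (cases "s = 0")
      case True then show ?thesis by (simp add: D_def)
    next
      case False
      have nD: "norm (D (s, t)) = (B * 6 * (\<bar>s\<bar>^3 * norm (\<phi>2 s))) * inverse (1 + (s * t)^2)" for t
        using abs_of_nonneg[OF D0[of "(s, t)"]] by (simp add: D_def)
      have "(\<integral>t. norm (D (s, t)) \<partial>lborel) = (\<integral>t. (B * 6 * (\<bar>s\<bar>^3 * norm (\<phi>2 s))) * inverse (1 + (s * t)^2) \<partial>lborel)"
        unfolding nD ..
      also have "\<dots> = (B * 6 * (\<bar>s\<bar>^3 * norm (\<phi>2 s))) * (pi / \<bar>s\<bar>)"
        using inv_sq_scaled[OF False] by simp
      also have "\<dots> = B * 6 * pi * (s^2 * norm (\<phi>2 s))"
        using False by (simp add: field_simps power2_eq_square power3_eq_cube abs_mult_self_eq)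
      finally show ?thesis .
    qed
    show "integrable lborel (\<lambda>s. \<integral>t. norm (D (s, t)) \<partial>lborel)"
      unfolding eq using I2(6) by simp
    show "AE s in lborel. integrable lborel (\<lambda>t. D (s, t))"
    proof (rule AE_I2)
      fix s
      show "integrable lborel (\<lambda>t. D (s, t))"
      proof (cases "s = 0")
        case True then show ?thesis by (simp add: D_def)
      next
        case False
        then show ?thesis unfolding D_def using inv_sq_scaled(1)[OF False] by simp
      qed
    qed
  qed
  have "integrable (lborel \<Otimes>\<^sub>M lborel) (\<lambda>p. H (snd p) * Wf (fst p) (snd p) * \<phi>2 (fst p))"
  proof (rule Bochner_Integration.integrable_bound[OF DI])
    show "(\<lambda>p. H (snd p) * Wf (fst p) (snd p) * \<phi>2 (fst p)) \<in> borel_measurable (lborel \<Otimes>\<^sub>M lborel)"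
      by measurable
    show "AE p in lborel \<Otimes>\<^sub>M lborel. norm (H (snd p) * Wf (fst p) (snd p) * \<phi>2 (fst p)) \<le> norm (D p)"
    proof (rule AE_I2)
      fix p :: "real \<times> real"
      obtain s t where p: "p = (s, t)" by (cases p)
      have nn: "0 \<le> 6 * \<bar>s\<bar>^3 / (1 + (s*t)^2)"
        by (intro divide_nonneg_pos) (auto simp: add_pos_nonneg)
      have "norm (H t * Wf s t * \<phi>2 s) \<le> B * (6 * \<bar>s\<bar>^3 / (1 + (s*t)^2)) * norm (\<phi>2 s)"
        unfolding norm_mult by (rule mult_mono[OF mult_mono[OF HB Wf_bound B0 norm_ge_zero] order_refl]) (use B0 nn in auto)
      also have "\<dots> = D p" unfolding D_def p by (simp add: field_simps)
      finally show "norm (H (snd p) * Wf (fst p) (snd p) * \<phi>2 (fst p)) \<le> norm (D p)"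
        using D0[of p] p by simp
    qed
  qed
  then show ?thesis by (simp add: case_prod_beta')
qed

lemma lemmaA:
  assumes g: "good \<phi> \<phi>1 \<phi>2" and Fm: "F \<in> borel_measurable lborel" and FB: "\<And>t. norm (F t) \<le> B"
  shows "FT_Ac_int F \<phi> = (\<integral>t. F t * KK \<phi> t \<partial>lborel)" "integrable lborel (KK \<phi>)"
proof -
  note G = good_D[OF g]
  have sd: "second_deriv \<phi> s = \<phi>2 s" for s
  proof -
    have "(\<lambda>x. vector_derivative \<phi> (at x)) = \<phi>1" using vector_derivative_at[OF G(1)] by auto
    then show ?thesis unfolding second_deriv_def using vector_derivative_at[OF G(2)] by simp
  qed
  have I: "integrable (lborel \<Otimes>\<^sub>M lborel) (\<lambda>(s, t). F t * Wf s t * \<phi>2 s)"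
    by (rule fub_int[OF g Fm FB])
  have "FT_Ac_int F \<phi> = (\<integral>s. Omega F s * \<phi>2 s \<partial>lborel)" unfolding FT_Ac_int_def sd ..
  also have "\<dots> = (\<integral>s. - (\<integral>t. F t * Wf s t * \<phi>2 s \<partial>lborel) \<partial>lborel)"
    by (simp add: Omega_eq)
  also have "\<dots> = - (\<integral>s. (\<integral>t. F t * Wf s t * \<phi>2 s \<partial>lborel) \<partial>lborel)"
    by (rule integral_minus)
  also have "(\<integral>s. (\<integral>t. F t * Wf s t * \<phi>2 s \<partial>lborel) \<partial>lborel) = (\<integral>t. (\<integral>s. F t * Wf s t * \<phi>2 s \<partial>lborel) \<partial>lborel)"
    using lborel_pair.Fubini_integral[OF I] by simp
  also have "\<dots> = (\<integral>t. F t * (- KK \<phi> t) \<partial>lborel)"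
  proof (rule integral_discrete_difference[where X="{0}"])
    fix t :: real assume "t \<notin> {0}"
    then have t: "t \<noteq> 0" by simp
    have "(\<integral>s. F t * Wf s t * \<phi>2 s \<partial>lborel) = F t * (\<integral>s. \<phi>2 s * Wf s t \<partial>lborel)"
      by (simp add: mult.assoc mult.commute[of "Wf _ t"])
    then show "(\<integral>s. F t * Wf s t * \<phi>2 s \<partial>lborel) = F t * (- KK \<phi> t)"
      using K_identity[OF g t] by simp
  qed auto
  finally show "FT_Ac_int F \<phi> = (\<integral>t. F t * KK \<phi> t \<partial>lborel)" by simp
  have I1: "integrable (lborel \<Otimes>\<^sub>M lborel) (\<lambda>(s, t). (\<lambda>_. 1::complex) t * Wf s t * \<phi>2 s)"
    by (rule fub_int[OF g, of _ 1]) auto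
  then have "integrable lborel (\<lambda>t. \<integral>s. (\<lambda>_. 1::complex) t * Wf s t * \<phi>2 s \<partial>lborel)"
    by (rule lborel_pair.integrable_snd)
  moreover have "integrable lborel (\<lambda>t. \<integral>s. (\<lambda>_. 1::complex) t * Wf s t * \<phi>2 s \<partial>lborel)
      \<longleftrightarrow> integrable lborel (\<lambda>t. - KK \<phi> t)"
  proof (rule integrable_discrete_difference[where X="{0}"])
    fix t :: real assume "t \<in> space lborel" "t \<notin> {0}"
    then have t: "t \<noteq> 0" by simp
    show "(\<integral>s. (\<lambda>_. 1::complex) t * Wf s t * \<phi>2 s \<partial>lborel) = - KK \<phi> t"
      using K_identity[OF g t] by (simp add: mult.commute)
  qed auto
  ultimately have "integrable lborel (\<lambda>t. - KK \<phi> t)" by simp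
  then show "integrable lborel (KK \<phi>)" by simp
qed


lemma meas_cont: "continuous_on UNIV (g::real \<Rightarrow> complex) \<Longrightarrow> g \<in> borel_measurable lborel"
  using borel_measurable_continuous_onI by simp

lemma exp_deriv_s:
  "((\<lambda>s. exp (- \<i> * of_real (s*t)) * c) has_vector_derivative
     (exp (- \<i> * of_real (s*t)) * (- \<i> * of_real t * c))) (at s)"
proof -
  have "((\<lambda>z. exp (- \<i> * (z * of_real t)) * c) has_field_derivative
      (exp (- \<i> * of_real (s*t)) * (- \<i> * of_real t * c))) (at (of_real s))"
    by (auto intro!: derivative_eq_intros simp: algebra_simps)
  from has_vector_derivative_real_field[OF this] show ?thesis by simp
qed

lemma FT_deriv:
  fixes g :: "real \<Rightarrow> complex"
  assumes c: "continuous_on UNIV g" and i0: "integrable lborel g"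
    and i1: "integrable lborel (\<lambda>t. \<bar>t\<bar> * norm (g t))"
  shows "(FT g has_vector_derivative FT (\<lambda>t. - \<i> * of_real t * g t) s) (at s)"
proof -
  have gm: "g \<in> borel_measurable lborel" by (rule meas_cont[OF c])
  have "((\<lambda>s. \<integral>t. exp (- \<i> * of_real (s*t)) * g t \<partial>lborel) has_vector_derivative
     (\<integral>t. exp (- \<i> * of_real (s*t)) * (- \<i> * of_real t * g t) \<partial>lborel)) (at s)"
  proof (rule param_deriv[where f="\<lambda>s t. exp (- \<i> * of_real (s*t)) * g t"
        and f'="\<lambda>s t. exp (- \<i> * of_real (s*t)) * (- \<i> * of_real t * g t)"
        and w="\<lambda>t. \<bar>t\<bar> * norm (g t)"])
    fix s
    show "(\<lambda>t. exp (- \<i> * of_real (s*t)) * g t) \<in> borel_measurable lborel"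
      by (rule meas_cont) (intro continuous_intros c)
    show "(\<lambda>t. exp (- \<i> * of_real (s*t)) * (- \<i> * of_real t * g t)) \<in> borel_measurable lborel"
      by (rule meas_cont) (intro continuous_intros c)
    show "integrable lborel (\<lambda>t. exp (- \<i> * of_real (s*t)) * g t)"
    proof (rule Bochner_Integration.integrable_bound[of _ "\<lambda>t. norm (g t)"])
      show "integrable lborel (\<lambda>t. norm (g t))" using i0 by simp
      show "(\<lambda>t. exp (- \<i> * of_real (s*t)) * g t) \<in> borel_measurable lborel"
        by (rule meas_cont) (intro continuous_intros c)
    qed (simp add: norm_mult norm_exp_ii)
  next
    show "integrable lborel (\<lambda>t. \<bar>t\<bar> * norm (g t))" by (rule i1)
  next
    fix s t
    show "((\<lambda>s. exp (- \<i> * of_real (s*t)) * g t) has_vector_derivative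
        exp (- \<i> * of_real (s*t)) * (- \<i> * of_real t * g t)) (at s)"
      by (rule exp_deriv_s)
  next
    fix s s' t
    have "norm (exp (- \<i> * of_real (s*t)) - exp (- \<i> * of_real (s'*t))) \<le> \<bar>(- (s*t)) - (- (s'*t))\<bar>"
      using norm_exp_diff[of "- (s*t)" "- (s'*t)"] by simp
    also have "\<dots> = \<bar>s - s'\<bar> * \<bar>t\<bar>" by (simp add: abs_mult[symmetric] algebra_simps)
    finally have "norm (exp (- \<i> * of_real (s*t)) - exp (- \<i> * of_real (s'*t))) * norm (g t)
        \<le> \<bar>s - s'\<bar> * \<bar>t\<bar> * norm (g t)" by (rule mult_right_mono) simp
    then show "norm (exp (- \<i> * of_real (s*t)) * g t - exp (- \<i> * of_real (s'*t)) * g t)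
        \<le> \<bar>s - s'\<bar> * (\<bar>t\<bar> * norm (g t))"
      by (simp add: left_diff_distrib[symmetric] norm_mult mult.assoc)
  next
    fix s t
    show "norm (exp (- \<i> * of_real (s*t)) * (- \<i> * of_real t * g t)) \<le> \<bar>t\<bar> * norm (g t)"
      by (simp add: norm_mult norm_exp_ii)
  qed
  then show ?thesis unfolding FT_def by simp
qed

lemma FT_cont:
  fixes g :: "real \<Rightarrow> complex"
  assumes gm: "g \<in> borel_measurable lborel" and i0: "integrable lborel g"
  shows "continuous_on UNIV (FT g)"
  unfolding FT_def
proof (rule param_cont[where f="\<lambda>s t. exp (- \<i> * of_real (s*t)) * g t" and w="\<lambda>t. norm (g t)"])
  show "(\<lambda>t. exp (- \<i> * of_real (s*t)) * g t) \<in> borel_measurable lborel" for s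
    using gm by measurable
  show "integrable lborel (\<lambda>t. norm (g t))" using i0 by simp
  show "continuous_on UNIV (\<lambda>s. exp (- \<i> * of_real (s*t)) * g t)" for t
    by (intro continuous_intros)
  show "norm (exp (- \<i> * of_real (s*t)) * g t) \<le> norm (g t)" for s t
    by (simp add: norm_mult norm_exp_ii)
qed

lemma FT_bound:
  fixes g :: "real \<Rightarrow> complex"
  shows "norm (FT g s) \<le> (\<integral>t. norm (g t) \<partial>lborel)"
proof -
  have "norm (FT g s) \<le> (\<integral>t. norm (exp (- \<i> * of_real (s*t)) * g t) \<partial>lborel)"
    unfolding FT_def by (rule integral_norm_bound)
  also have "\<dots> = (\<integral>t. norm (g t) \<partial>lborel)" by (simp add: norm_mult norm_exp_ii)
  finally show ?thesis .
qed

lemma si_mult: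
  fixes v M :: "real \<Rightarrow> complex"
  assumes v: "set_integrable lborel {t. 1 < \<bar>t\<bar>} (\<lambda>t. of_real (t^2) * v t)"
    and vm: "v \<in> borel_measurable lborel"
    and M: "M \<in> borel_measurable lborel" and MC: "\<And>t. norm (M t) \<le> C"
  shows "set_integrable lborel {t. 1 < \<bar>t\<bar>} (\<lambda>t. of_real (t^2) * (M t * v t))"
  unfolding set_integrable_def
proof (rule Bochner_Integration.integrable_bound)
  have [measurable]: "{t::real. 1 < \<bar>t\<bar>} \<in> sets lborel" by measurable
  note [measurable] = vm M
  show "integrable lborel (\<lambda>t. C * norm (indicator {t. 1 < \<bar>t\<bar>} t *\<^sub>R (of_real (t^2) * v t)))"
    using v unfolding set_integrable_def by (intro integrable_mult_right integrable_norm)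
  show "(\<lambda>t. indicator {t. 1 < \<bar>t\<bar>} t *\<^sub>R (of_real (t^2) * (M t * v t))) \<in> borel_measurable lborel"
    by measurable
  have C0: "0 \<le> C" using MC[of 0] norm_ge_zero order_trans by blast
  show "AE t in lborel. norm (indicator {t. 1 < \<bar>t\<bar>} t *\<^sub>R (of_real (t^2) * (M t * v t)))
      \<le> norm (C * norm (indicator {t. 1 < \<bar>t\<bar>} t *\<^sub>R (of_real (t^2) * v t)))"
  proof (rule AE_I2)
    fix t
    have "t^2 * (norm (M t) * norm (v t)) \<le> C * (t^2 * norm (v t))"
      using mult_right_mono[OF MC[of t], of "t^2 * norm (v t)"] by (simp add: algebra_simps)
    then show "norm (indicator {t. 1 < \<bar>t\<bar>} t *\<^sub>R (of_real (t^2) * (M t * v t)))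
      \<le> norm (C * norm (indicator {t. 1 < \<bar>t\<bar>} t *\<^sub>R (of_real (t^2) * v t)))"
      using C0 by (auto simp: norm_mult norm_power split: split_indicator)
  qed
qed

lemma si_add:
  fixes a b :: "real \<Rightarrow> complex"
  assumes "set_integrable lborel A (\<lambda>t. of_real (t^2) * a t)"
    and "set_integrable lborel A (\<lambda>t. of_real (t^2) * b t)"
  shows "set_integrable lborel A (\<lambda>t. of_real (t^2) * (a t + b t))"
  using Bochner_Integration.integrable_add[OF assms[unfolded set_integrable_def]]
  unfolding set_integrable_def by (simp add: algebra_simps scaleR_add_right)


lemma phi_good:
  fixes g1 g2 g2' g2'' :: "real \<Rightarrow> complex"
  assumes c1: "continuous_on UNIV g1"
    and i10: "set_integrable lborel {t. 1 < \<bar>t\<bar>} (\<lambda>t. complex_of_real (t^2) * g1 t)"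
    and g2: "good g2 g2' g2''"
  shows "\<exists>\<phi>1 \<phi>2. good (\<lambda>s. FT g1 s * g2 s) \<phi>1 \<phi>2"
proof -
  define h1 where "h1 = (\<lambda>t. - \<i> * of_real t * g1 t)"
  define h2 where "h2 = (\<lambda>t. - \<i> * of_real t * h1 t)"
  note G = good_D[OF g2]
  note I = cont_int[OF c1 i10]
  have h1c: "continuous_on UNIV h1" unfolding h1_def by (intro continuous_intros c1)
  have h2c: "continuous_on UNIV h2" unfolding h2_def by (intro continuous_intros h1c)
  have h1i: "integrable lborel h1"
    unfolding h1_def using integrable_mult_right[OF I(2), of "- \<i>"] by (simp add: mult.assoc)
  have h1n: "integrable lborel (\<lambda>t. \<bar>t\<bar> * norm (h1 t))"
    unfolding h1_def using I(6) by (simp add: norm_mult mult.assoc[symmetric] abs_mult_self_eq power2_eq_square)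
  have h2i: "integrable lborel h2"
  proof (rule Bochner_Integration.integrable_bound[OF I(3)])
    show "h2 \<in> borel_measurable lborel" by (rule meas_cont[OF h2c])
    show "AE t in lborel. norm (h2 t) \<le> norm (complex_of_real (t^2) * g1 t)"
      by (rule AE_I2) (simp add: h2_def h1_def norm_mult norm_power abs_mult_self_eq power2_eq_square)
  qed
  have d0: "(FT g1 has_vector_derivative FT h1 s) (at s)" for s
    unfolding h1_def by (rule FT_deriv[OF c1 I(1) I(5)])
  have d1: "(FT h1 has_vector_derivative FT h2 s) (at s)" for s
    unfolding h2_def by (rule FT_deriv[OF h1c h1i h1n])
  have c0: "continuous_on UNIV (FT g1)" by (rule FT_cont[OF meas_cont[OF c1] I(1)])
  have cc1: "continuous_on UNIV (FT h1)" by (rule FT_cont[OF meas_cont[OF h1c] h1i])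
  have cc2: "continuous_on UNIV (FT h2)" by (rule FT_cont[OF meas_cont[OF h2c] h2i])
  have b0: "\<And>s. norm (FT g1 s) \<le> (\<integral>t. norm (g1 t) \<partial>lborel)" by (rule FT_bound)
  have b1: "\<And>s. norm (FT h1 s) \<le> (\<integral>t. norm (h1 t) \<partial>lborel)" by (rule FT_bound)
  have b2: "\<And>s. norm (FT h2 s) \<le> (\<integral>t. norm (h2 t) \<partial>lborel)" by (rule FT_bound)
  have m0: "FT g1 \<in> borel_measurable lborel" by (rule meas_cont[OF c0])
  have m1: "FT h1 \<in> borel_measurable lborel" by (rule meas_cont[OF cc1])
  have m2: "FT h2 \<in> borel_measurable lborel" by (rule meas_cont[OF cc2])
  have v0: "g2 \<in> borel_measurable lborel" by (rule meas_cont[OF G(3)])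
  have v1: "g2' \<in> borel_measurable lborel" by (rule meas_cont[OF G(4)])
  have v2: "g2'' \<in> borel_measurable lborel" by (rule meas_cont[OF G(5)])
  have "good (\<lambda>s. FT g1 s * g2 s) (\<lambda>s. FT g1 s * g2' s + FT h1 s * g2 s)
     (\<lambda>s. (FT g1 s * g2'' s + FT h1 s * g2' s) + (FT h1 s * g2' s + FT h2 s * g2 s))"
    unfolding good_def
  proof (intro conjI allI)
    fix t
    show "((\<lambda>s. FT g1 s * g2 s) has_vector_derivative FT g1 t * g2' t + FT h1 t * g2 t) (at t)"
      by (rule has_vector_derivative_mult[OF d0 G(1)])
    show "((\<lambda>s. FT g1 s * g2' s + FT h1 s * g2 s) has_vector_derivative
        (FT g1 t * g2'' t + FT h1 t * g2' t) + (FT h1 t * g2' t + FT h2 t * g2 t)) (at t)"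
      by (intro has_vector_derivative_add has_vector_derivative_mult d0 d1 G(1) G(2))
  next
    show "continuous_on UNIV (\<lambda>s. (FT g1 s * g2'' s + FT h1 s * g2' s) + (FT h1 s * g2' s + FT h2 s * g2 s))"
      by (intro continuous_intros c0 cc1 cc2 G(3) G(4) G(5))
    show "set_integrable lborel {t. 1 < \<bar>t\<bar>} (\<lambda>t. of_real (t^2) * (FT g1 t * g2 t))"
      by (rule si_mult[OF G(6) v0 m0 b0])
    show "set_integrable lborel {t. 1 < \<bar>t\<bar>} (\<lambda>t. of_real (t^2) * (FT g1 t * g2' t + FT h1 t * g2 t))"
      by (intro si_add si_mult[OF G(7) v1 m0 b0] si_mult[OF G(6) v0 m1 b1])
    show "set_integrable lborel {t. 1 < \<bar>t\<bar>} (\<lambda>t. of_real (t^2) *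
        ((FT g1 t * g2'' t + FT h1 t * g2' t) + (FT h1 t * g2' t + FT h2 t * g2 t)))"
      by (intro si_add si_mult[OF G(8) v2 m0 b0] si_mult[OF G(7) v1 m1 b1] si_mult[OF G(6) v0 m2 b2])
  qed
  then show ?thesis by blast
qed

lemma conv_facts:
  fixes F g :: "real \<Rightarrow> complex"
  assumes Fm: "F \<in> borel_measurable lborel" and FB: "\<And>t. norm (F t) \<le> B"
    and g: "integrable lborel g"
  shows "conv_prim F g \<in> borel_measurable lborel"
    "\<And>x. norm (conv_prim F g x) \<le> B * (\<integral>t. norm (g t) \<partial>lborel)"
proof -
  have [measurable]: "F \<in> borel_measurable lborel" "g \<in> borel_measurable lborel" using Fm g by auto
  show "conv_prim F g \<in> borel_measurable lborel"
    unfolding conv_prim_def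
    by (rule lborel.borel_measurable_lebesgue_integral) measurable
  fix x
  have B0: "0 \<le> B" using FB[of 0] norm_ge_zero order_trans by blast
  have "norm (conv_prim F g x) \<le> (\<integral>y. norm (F (x - y) * g y) \<partial>lborel)"
    unfolding conv_prim_def by (rule integral_norm_bound)
  also have "\<dots> \<le> (\<integral>y. B * norm (g y) \<partial>lborel)"
  proof (rule integral_mono)
    show "integrable lborel (\<lambda>y. B * norm (g y))" using g by simp
    show "integrable lborel (\<lambda>y. norm (F (x - y) * g y))"
    proof (rule Bochner_Integration.integrable_bound[of _ "\<lambda>y. B * norm (g y)"])
      show "integrable lborel (\<lambda>y. B * norm (g y))" using g by simp
      show "(\<lambda>y. norm (F (x - y) * g y)) \<in> borel_measurable lborel" by measurable
      show "AE y in lborel. norm (norm (F (x - y) * g y)) \<le> norm (B * norm (g y))"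
        using B0 by (intro AE_I2) (simp add: norm_mult mult_right_mono FB)
    qed
    show "norm (F (x - y) * g y) \<le> B * norm (g y)" for y
      by (simp add: norm_mult mult_right_mono FB)
  qed
  also have "\<dots> = B * (\<integral>t. norm (g t) \<partial>lborel)" by simp
  finally show "norm (conv_prim F g x) \<le> B * (\<integral>t. norm (g t) \<partial>lborel)" .
qed


lemma exp_comb: "exp (- \<i> * of_real (s*u)) * exp (- \<i> * of_real (s*y)) = exp (- \<i> * of_real (s*(y+u)))"
  by (simp add: exp_add[symmetric] algebra_simps)

lemma KK_conv:
  fixes g1 g2 :: "real \<Rightarrow> complex"
  assumes c1: "continuous_on UNIV g1" and i1: "integrable lborel g1"
    and c2: "continuous_on UNIV g2" and i2: "integrable lborel (\<lambda>s. \<bar>s\<bar> * norm (g2 s))"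
  shows "KK (\<lambda>s. FT g1 s * g2 s) u = (\<integral>y. g1 y * KK g2 (y + u) \<partial>lborel)"
proof -
  have [measurable]: "g1 \<in> borel_measurable lborel" "g2 \<in> borel_measurable lborel"
    using meas_cont[OF c1] meas_cont[OF c2] by auto
  define f where "f s y = \<i> * of_real s * exp (- \<i> * of_real (s*u)) * g2 s * (exp (- \<i> * of_real (s*y)) * g1 y)" for s y
  have A: "KK (\<lambda>s. FT g1 s * g2 s) u = (\<integral>s. \<integral>y. f s y \<partial>lborel \<partial>lborel)"
  proof -
    have "(\<integral>y. f s y \<partial>lborel) = (\<i> * of_real s * exp (- \<i> * of_real (s*u)) * g2 s) * FT g1 s" for s
      unfolding f_def FT_def by (rule integral_mult_right_zero)
    then have "\<i> * of_real s * exp (- \<i> * of_real (s*u)) * (FT g1 s * g2 s) = (\<integral>y. f s y \<partial>lborel)" for s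
      by (simp add: mult_ac)
    then show ?thesis unfolding KK_def by simp
  qed
  have I: "integrable (lborel \<Otimes>\<^sub>M lborel) (case_prod f)"
  proof (rule Bochner_Integration.integrable_bound)
    show "integrable (lborel \<Otimes>\<^sub>M lborel) (\<lambda>p. (\<bar>fst p\<bar> * norm (g2 (fst p))) * norm (g1 (snd p)))"
      by (rule prod_int[OF i2]) (use i1 in simp)
    show "case_prod f \<in> borel_measurable (lborel \<Otimes>\<^sub>M lborel)"
      unfolding f_def by measurable
    show "AE p in lborel \<Otimes>\<^sub>M lborel. norm (case_prod f p) \<le> norm (\<bar>fst p\<bar> * norm (g2 (fst p)) * norm (g1 (snd p)))"
      by (rule AE_I2) (auto simp: f_def norm_mult norm_exp_ii)
  qed
  have B: "(\<integral>s. \<integral>y. f s y \<partial>lborel \<partial>lborel) = (\<integral>y. \<integral>s. f s y \<partial>lborel \<partial>lborel)"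
    using lborel_pair.Fubini_integral[OF I] by simp
  have C: "(\<integral>s. f s y \<partial>lborel) = g1 y * KK g2 (y + u)" for y
  proof -
    have "f s y = g1 y * (\<i> * of_real s * exp (- \<i> * of_real (s*(y+u))) * g2 s)" for s
      unfolding f_def exp_comb[symmetric] by (simp add: mult_ac)
    then show ?thesis unfolding KK_def by simp
  qed
  show ?thesis using A B C by simp
qed


theorem mainTheorem10:
  fixes F g1 g1' g1'' g2 g2' g2'' :: "real \<Rightarrow> complex"
  assumes F: "F \<in> Bc"
    and d11: "\<And>t. (g1 has_vector_derivative g1' t) (at t)"
    and d12: "\<And>t. (g1' has_vector_derivative g1'' t) (at t)"
    and c1: "continuous_on UNIV g1''"
    and d21: "\<And>t. (g2 has_vector_derivative g2' t) (at t)"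
    and d22: "\<And>t. (g2' has_vector_derivative g2'' t) (at t)"
    and c2: "continuous_on UNIV g2''"
    and i10: "set_integrable lborel {t. 1 < \<bar>t\<bar>} (\<lambda>t. complex_of_real (t^2) * g1 t)"
    and i11: "set_integrable lborel {t. 1 < \<bar>t\<bar>} (\<lambda>t. complex_of_real (t^2) * g1' t)"
    and i12: "set_integrable lborel {t. 1 < \<bar>t\<bar>} (\<lambda>t. complex_of_real (t^2) * g1'' t)"
    and i20: "set_integrable lborel {t. 1 < \<bar>t\<bar>} (\<lambda>t. complex_of_real (t^2) * g2 t)"
    and i21: "set_integrable lborel {t. 1 < \<bar>t\<bar>} (\<lambda>t. complex_of_real (t^2) * g2' t)"
    and i22: "set_integrable lborel {t. 1 < \<bar>t\<bar>} (\<lambda>t. complex_of_real (t^2) * g2'' t)"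
  shows "FT_Ac_int (conv_prim F g1) g2 = FT_Ac_int F (\<lambda>s. FT g1 s * g2 s)"
proof -
  obtain B where FB: "\<And>t. norm (F t) \<le> B" using Bc_bounded[OF F] by blast
  have B0: "0 \<le> B" using FB[of 0] norm_ge_zero order_trans by blast
  have Fc: "continuous_on UNIV F" using F by (simp add: Bc_def)
  have Fm: "F \<in> borel_measurable lborel" by (rule meas_cont[OF Fc])
  have cg1: "continuous_on UNIV g1"
    by (rule continuous_on_vector_derivative, rule has_vector_derivative_at_within, rule d11)
  have cg2: "continuous_on UNIV g2"
    by (rule continuous_on_vector_derivative, rule has_vector_derivative_at_within, rule d21)
  have g2good: "good g2 g2' g2''" unfolding good_def using d21 d22 c2 i20 i21 i22 by auto
  note I1 = cont_int[OF cg1 i10]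
  note I2 = cont_int[OF cg2 i20]
  obtain \<phi>1 \<phi>2 where pg: "good (\<lambda>s. FT g1 s * g2 s) \<phi>1 \<phi>2"
    using phi_good[OF cg1 i10 g2good] by blast
  define C where "C = conv_prim F g1"
  define BC where "BC = B * (\<integral>t. norm (g1 t) \<partial>lborel)"
  have Cm: "C \<in> borel_measurable lborel" and CB: "\<And>x. norm (C x) \<le> BC"
    using conv_facts[OF Fm FB I1(1)] by (auto simp: C_def BC_def)
  have L: "FT_Ac_int C g2 = (\<integral>t. C t * KK g2 t \<partial>lborel)" and K2i: "integrable lborel (KK g2)"
    using lemmaA[OF g2good Cm CB] by auto
  have R: "FT_Ac_int F (\<lambda>s. FT g1 s * g2 s) = (\<integral>t. F t * KK (\<lambda>s. FT g1 s * g2 s) t \<partial>lborel)"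
    by (rule lemmaA(1)[OF pg Fm FB])
  define K2 where "K2 = KK g2"
  have K2i': "integrable lborel K2" using K2i by (simp add: K2_def)
  have [measurable]: "K2 \<in> borel_measurable lborel" using K2i' by auto
  have [measurable]: "g1 \<in> borel_measurable lborel" "F \<in> borel_measurable lborel"
    using meas_cont[OF cg1] Fm by auto
  have s1: "(\<integral>t. C t * K2 t \<partial>lborel) = (\<integral>t. \<integral>y. F (t - y) * g1 y * K2 t \<partial>lborel \<partial>lborel)"
    unfolding C_def conv_prim_def by simp
  have J1: "integrable (lborel \<Otimes>\<^sub>M lborel) (\<lambda>(t, y). F (t - y) * g1 y * K2 t)"
  proof (rule Bochner_Integration.integrable_bound)
    show "integrable (lborel \<Otimes>\<^sub>M lborel) (\<lambda>p. (B * norm (K2 (fst p))) * norm (g1 (snd p)))"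
      by (rule prod_int) (use K2i' I1(4) in simp_all)
    show "(\<lambda>(t, y). F (t - y) * g1 y * K2 t) \<in> borel_measurable (lborel \<Otimes>\<^sub>M lborel)"
      by measurable
    show "AE p in lborel \<Otimes>\<^sub>M lborel. norm ((\<lambda>(t, y). F (t - y) * g1 y * K2 t) p)
        \<le> norm (B * norm (K2 (fst p)) * norm (g1 (snd p)))"
    proof (rule AE_I2)
      fix p :: "real \<times> real"
      obtain t y where p: "p = (t, y)" by (cases p)
      have "norm (F (t - y)) * norm (g1 y) * norm (K2 t) \<le> B * norm (g1 y) * norm (K2 t)"
        by (intro mult_right_mono FB) auto
      then show "norm ((\<lambda>(t, y). F (t - y) * g1 y * K2 t) p) \<le> norm (B * norm (K2 (fst p)) * norm (g1 (snd p)))"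
        using B0 p by (simp add: norm_mult mult_ac)
    qed
  qed
  have s2: "(\<integral>t. \<integral>y. F (t - y) * g1 y * K2 t \<partial>lborel \<partial>lborel) = (\<integral>y. \<integral>t. F (t - y) * g1 y * K2 t \<partial>lborel \<partial>lborel)"
    using lborel_pair.Fubini_integral[OF J1] by simp
  have s3: "(\<integral>t. F (t - y) * g1 y * K2 t \<partial>lborel) = (\<integral>u. F u * g1 y * K2 (y + u) \<partial>lborel)" for y
    using lborel_integral_real_affine[of 1 "\<lambda>t. F (t - y) * g1 y * K2 t" y] by simp
  have J2: "integrable (lborel \<Otimes>\<^sub>M lborel) (\<lambda>(y, u). F u * g1 y * K2 (y + u))"
  proof (rule Bochner_Integration.integrable_bound)
    show "integrable (lborel \<Otimes>\<^sub>M lborel) (\<lambda>p. norm (g1 (fst p)) * (B * norm (K2 (fst p + snd p))))"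
      by (rule shear_int) (use K2i' I1(4) in simp_all)
    show "(\<lambda>(y, u). F u * g1 y * K2 (y + u)) \<in> borel_measurable (lborel \<Otimes>\<^sub>M lborel)"
      by measurable
    show "AE p in lborel \<Otimes>\<^sub>M lborel. norm ((\<lambda>(y, u). F u * g1 y * K2 (y + u)) p)
        \<le> norm (norm (g1 (fst p)) * (B * norm (K2 (fst p + snd p))))"
    proof (rule AE_I2)
      fix p :: "real \<times> real"
      obtain y u where p: "p = (y, u)" by (cases p)
      have "norm (F u) * norm (g1 y) * norm (K2 (y + u)) \<le> B * norm (g1 y) * norm (K2 (y + u))"
        by (intro mult_right_mono FB) auto
      then show "norm ((\<lambda>(y, u). F u * g1 y * K2 (y + u)) p) \<le> norm (norm (g1 (fst p)) * (B * norm (K2 (fst p + snd p))))"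
        using B0 p by (simp add: norm_mult mult_ac)
    qed
  qed
  have s4: "(\<integral>y. \<integral>u. F u * g1 y * K2 (y + u) \<partial>lborel \<partial>lborel) = (\<integral>u. \<integral>y. F u * g1 y * K2 (y + u) \<partial>lborel \<partial>lborel)"
    using lborel_pair.Fubini_integral[OF J2] by simp
  have s5: "(\<integral>y. F u * g1 y * K2 (y + u) \<partial>lborel) = F u * KK (\<lambda>s. FT g1 s * g2 s) u" for u
    using KK_conv[OF cg1 I1(1) cg2 I2(5), of u] by (simp add: K2_def mult.assoc)
  have "FT_Ac_int (conv_prim F g1) g2 = (\<integral>t. C t * K2 t \<partial>lborel)"
    using L by (simp add: C_def K2_def)
  also have "\<dots> = (\<integral>y. \<integral>t. F (t - y) * g1 y * K2 t \<partial>lborel \<partial>lborel)" using s1 s2 by simp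
  also have "\<dots> = (\<integral>y. \<integral>u. F u * g1 y * K2 (y + u) \<partial>lborel \<partial>lborel)" using s3 by simp
  also have "\<dots> = (\<integral>u. \<integral>y. F u * g1 y * K2 (y + u) \<partial>lborel \<partial>lborel)" by (rule s4)
  also have "\<dots> = (\<integral>u. F u * KK (\<lambda>s. FT g1 s * g2 s) u \<partial>lborel)" using s5 by simp
  also have "\<dots> = FT_Ac_int F (\<lambda>s. FT g1 s * g2 s)" using R by simp
  finally show ?thesis .
qed

end
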